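(* Let $\epsilon>0$, let $\mathbf{w}\in\mathbb{R}^d$ be non-increasing, and let $1\le k\le d-1$ with $\mathbf{w}^k_{max}>\mathbf{w}^k_{min}$. For every scored vote $v\in\mathbb{D}_v$, the private view $\tilde v$ output by the additive mechanism satisfies $\mathbb{E}[\tilde v]=v$.
   Context: Candidates are $C_1,\dots,C_d$; a vote is a linear ordering; the scored vote $v$ assigns score $w_j$ to the candidate at rank $j$; $\mathbb{D}_v$ is the set of permutations of $\mathbf{w}$. Let $\mathcal{C}^k$ be the set of $k$-element subsets of candidates, $\mathbf{w}^k_{max}=\sum_{j=1}^kw_j$, $\mathbf{w}^k_{min}=\sum_{j=d-k+1}^dw_j$, $W=\sum_{j=1}^dw_j$. The additive mechanism on input $v$ outputs $S\in\mathcal{C}^k$ with probability $$\Pr[S\mid v]=\frac{\sum_{C_{j'}\in S}v_{j'}-\mathbf{w}^k_{min}}{\mathbf{w}^k_{max}-\mathbf{w}^k_{min}}\cdot\frac{e^\epsilon-1}{\Phi}+\frac1\Phi,\qquad \Phi=\binom dk\frac{\frac kd(e^\epsilon-1)W-e^\epsilon\mathbf{w}^k_{min}+\mathbf{w}^k_{max}}{\mathbf{w}^k_{max}-\mathbf{w}^k_{min}},$$ and the private view $\tilde v_j=a_k[C_j\in S]-b_k$, where $a_k=\big[W(e^\epsilon-1)-\tfrac dke^\epsilon\mathbf{w}^k_{min}+\tfrac dk\mathbf{w}^k_{max}\big]\frac{d-1}{(d-k)(e^\epsilon-1)}$ and $b_k=\big[\tfrac{(k-1)(e^\epsilon-1)}{d-1}W-e^\epsilon\mathbf{w}^k_{min}+\mathbf{w}^k_{max}\big]\frac{d-1}{(d-k)(e^\epsilon-1)}$.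 *)

theory Defs
  imports Complex_Main "HOL-Combinatorics.Permutations"
begin

text \<open>Candidates are indexed by 1..d; a weight vector is w :: nat => real,
  with w j the score of rank j.\<close>

definition wmax :: "(nat \<Rightarrow> real) \<Rightarrow> nat \<Rightarrow> real" where
  "wmax w k = (\<Sum>j=1..k. w j)"

definition wmin :: "(nat \<Rightarrow> real) \<Rightarrow> nat \<Rightarrow> nat \<Rightarrow> real" where
  "wmin w d k = (\<Sum>j=d-k+1..d. w j)"

definition Wtot :: "(nat \<Rightarrow> real) \<Rightarrow> nat \<Rightarrow> real" where
  "Wtot w d = (\<Sum>j=1..d. w j)"

definition scored_votes :: "(nat \<Rightarrow> real) \<Rightarrow> nat \<Rightarrow> (nat \<Rightarrow> real) set" where
  "scored_votes w d = {v. \<exists>\<sigma>. \<sigma> permutes {1..d} \<and> (\<forall>j\<in>{1..d}. v j = w (\<sigma> j))}"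

definition ksubsets :: "nat \<Rightarrow> nat \<Rightarrow> nat set set" where
  "ksubsets d k = {S. S \<subseteq> {1..d} \<and> card S = k}"

definition Phi :: "real \<Rightarrow> (nat \<Rightarrow> real) \<Rightarrow> nat \<Rightarrow> nat \<Rightarrow> real" where
  "Phi \<epsilon> w d k = real (d choose k) *
     ((real k / real d) * (exp \<epsilon> - 1) * Wtot w d - exp \<epsilon> * wmin w d k + wmax w k)
     / (wmax w k - wmin w d k)"

definition add_prob :: "real \<Rightarrow> (nat \<Rightarrow> real) \<Rightarrow> nat \<Rightarrow> nat \<Rightarrow> (nat \<Rightarrow> real) \<Rightarrow> nat set \<Rightarrow> real" where
  "add_prob \<epsilon> w d k v S =
     ((\<Sum>j\<in>S. v j) - wmin w d k) / (wmax w k - wmin w d k) * ((exp \<epsilon> - 1) / Phi \<epsilon> w d k)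
     + 1 / Phi \<epsilon> w d k"

definition a_coef :: "real \<Rightarrow> (nat \<Rightarrow> real) \<Rightarrow> nat \<Rightarrow> nat \<Rightarrow> real" where
  "a_coef \<epsilon> w d k =
     (Wtot w d * (exp \<epsilon> - 1) - (real d / real k) * exp \<epsilon> * wmin w d k
       + (real d / real k) * wmax w k)
     * (real d - 1) / ((real d - real k) * (exp \<epsilon> - 1))"

definition b_coef :: "real \<Rightarrow> (nat \<Rightarrow> real) \<Rightarrow> nat \<Rightarrow> nat \<Rightarrow> real" where
  "b_coef \<epsilon> w d k =
     ((real k - 1) * (exp \<epsilon> - 1) / (real d - 1) * Wtot w d - exp \<epsilon> * wmin w d k + wmax w k)
     * (real d - 1) / ((real d - real k) * (exp \<epsilon> - 1))"

definition private_view :: "real \<Rightarrow> (nat \<Rightarrow> real) \<Rightarrow> nat \<Rightarrow> nat \<Rightarrow> nat set \<Rightarrow> nat \<Rightarrow> real" where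
  "private_view \<epsilon> w d k S j = a_coef \<epsilon> w d k * (if j \<in> S then 1 else 0) - b_coef \<epsilon> w d k"

end

theory Submission
  imports Defs
begin

lemma ksub_insert:
  assumes "finite A" "i \<in> A" "m \<ge> 1"
  shows "{S. S \<subseteq> A \<and> card S = m \<and> i \<in> S} = insert i ` {T. T \<subseteq> A - {i} \<and> card T = m - 1}"
proof
  show "{S. S \<subseteq> A \<and> card S = m \<and> i \<in> S} \<subseteq> insert i ` {T. T \<subseteq> A - {i} \<and> card T = m - 1}"
  proof
    fix S assume S: "S \<in> {S. S \<subseteq> A \<and> card S = m \<and> i \<in> S}"
    have fS: "finite S" using S assms(1) finite_subset by blast
    have "S = insert i (S - {i})" using S by auto
    moreover have "card (S - {i}) = m - 1" using S fS by auto
    ultimately show "S \<in> insert i ` {T. T \<subseteq> A - {i} \<and> card T = m - 1}" using S by blast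
  qed
next
  show "insert i ` {T. T \<subseteq> A - {i} \<and> card T = m - 1} \<subseteq> {S. S \<subseteq> A \<and> card S = m \<and> i \<in> S}"
  proof
    fix S assume "S \<in> insert i ` {T. T \<subseteq> A - {i} \<and> card T = m - 1}"
    then obtain T where T: "T \<subseteq> A - {i}" "card T = m - 1" "S = insert i T" by blast
    have fT: "finite T" using T assms(1) finite_subset by blast
    have "i \<notin> T" using T by blast
    then have "card S = m" using T fT assms(3) by simp
    then show "S \<in> {S. S \<subseteq> A \<and> card S = m \<and> i \<in> S}" using T assms by auto
  qed
qed

lemma card_ksub_mem:
  assumes "finite A" "i \<in> A" "m \<ge> 1"
  shows "card {S. S \<subseteq> A \<and> card S = m \<and> i \<in> S} = (card A - 1) choose (m - 1)"
proof -
  have inj: "inj_on (insert i) {T. T \<subseteq> A - {i} \<and> card T = m - 1}"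
    by (rule inj_onI) (metis Diff_insert_absorb insert_Diff_single subset_Diff_insert mem_Collect_eq)
  have "card {S. S \<subseteq> A \<and> card S = m \<and> i \<in> S} = card {T. T \<subseteq> A - {i} \<and> card T = m - 1}"
    using ksub_insert[OF assms] card_image[OF inj] by simp
  also have "\<dots> = card (A - {i}) choose (m - 1)" using n_subsets assms(1) by blast
  finally show ?thesis using assms by simp
qed

lemma sum_ksub_sum:
  assumes "finite A"
  shows "(\<Sum>S\<in>{S. S \<subseteq> A \<and> card S = m}. \<Sum>i\<in>S. f i)
       = real m / real (card A) * real (card A choose m) * (\<Sum>i\<in>A. (f i :: real))"
proof (cases "m = 0")
  case True
  have "{S. S \<subseteq> A \<and> card S = m} = {{}}" using True assms by (auto intro: finite_subset dest: rev_finite_subset)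
  then show ?thesis using True by simp
next
  case False
  let ?K = "{S. S \<subseteq> A \<and> card S = m}"
  have fK: "finite ?K" using assms by (simp add: finite_subset)
  have "(\<Sum>S\<in>?K. \<Sum>i\<in>S. f i) = (\<Sum>S\<in>?K. \<Sum>i\<in>A. if i \<in> S then f i else 0)"
    by (rule sum.cong) (auto simp: sum.If_cases assms intro!: sum.cong dest: Int_absorb1)
  also have "\<dots> = (\<Sum>i\<in>A. \<Sum>S\<in>?K. if i \<in> S then f i else 0)" by (rule sum.swap)
  also have "\<dots> = (\<Sum>i\<in>A. f i * real (card {S. S \<subseteq> A \<and> card S = m \<and> i \<in> S}))"
    by (rule sum.cong) (auto simp: sum.If_cases fK Int_def conj_commute conj_left_commute)
  also have "\<dots> = (\<Sum>i\<in>A. f i * real ((card A - 1) choose (m - 1)))"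
    using card_ksub_mem[OF assms] False by (intro sum.cong) auto
  also have "\<dots> = real m / real (card A) * real (card A choose m) * (\<Sum>i\<in>A. f i)"
  proof (cases "A = {}")
    case True then show ?thesis by simp
  next
    case ne: False
    then have "card A > 0" using assms by (simp add: card_gt_0_iff)
    have "m * (card A choose m) = card A * ((card A - 1) choose (m - 1))"
      using times_binomial_minus1_eq False by blast
    then have "real m * real (card A choose m) = real (card A) * real ((card A - 1) choose (m - 1))"
      by (metis of_nat_mult)
    then have "real ((card A - 1) choose (m - 1)) = real m / real (card A) * real (card A choose m)"
      using \<open>card A > 0\<close> by (simp add: field_simps)
    then show ?thesis by (simp only: sum_distrib_right[symmetric] mult.commute)
  qed
  finally show ?thesis .
qed


lemma wmin_bound:
  assumes mono: "\<forall>i j. 1 \<le> i \<and> i \<le> j \<and> j \<le> d \<longrightarrow> w j \<le> w i"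
    and k: "1 \<le> k" "k \<le> d - 1"
  shows "real d * wmin w d k \<le> real k * Wtot w d"
proof -
  define m where "m = d - k"
  have m1: "m \<ge> 1" and dm: "d = m + k" using k by (auto simp: m_def)
  have W: "Wtot w d = (\<Sum>j=1..m. w j) + (\<Sum>j=m+1..d. w j)"
    unfolding Wtot_def using sum.ub_add_nat[of 1 m w k] dm by simp
  have B: "wmin w d k = (\<Sum>j=m+1..d. w j)" unfolding wmin_def m_def using k by simp
  have b1: "(\<Sum>j=m+1..d. w j) \<le> real k * w m"
  proof -
    have "(\<Sum>j=m+1..d. w j) \<le> real (card {m+1..d}) * w m"
      by (rule sum_bounded_above) (use mono m1 dm in auto)
    then show ?thesis using dm by simp
  qed
  have b2: "real m * w m \<le> (\<Sum>j=1..m. w j)"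
  proof -
    have "real (card {1..m}) * w m \<le> (\<Sum>j=1..m. w j)"
      by (rule sum_bounded_below) (use mono m1 dm in auto)
    then show ?thesis by simp
  qed
  have "real d * wmin w d k = real k * wmin w d k + real m * (\<Sum>j=m+1..d. w j)"
    using dm B by (simp add: algebra_simps)
  also have "\<dots> \<le> real k * wmin w d k + real m * (real k * w m)"
    using b1 by (intro add_left_mono mult_left_mono) auto
  also have "\<dots> \<le> real k * wmin w d k + real k * (\<Sum>j=1..m. w j)"
    using b2 k by (simp add: mult.left_commute[of "real m"])
  also have "\<dots> = real k * Wtot w d" using W B by (simp add: algebra_simps)
  finally show ?thesis .
qed

theorem lemma6p3:
  fixes \<epsilon> :: real and w v :: "nat \<Rightarrow> real" and d k :: nat
  assumes "\<epsilon> > 0"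
    and "\<forall>i j. 1 \<le> i \<and> i \<le> j \<and> j \<le> d \<longrightarrow> w j \<le> w i"
    and "1 \<le> k" and "k \<le> d - 1"
    and "wmax w k > wmin w d k"
    and "v \<in> scored_votes w d"
  shows "\<forall>j\<in>{1..d}.
           (\<Sum>S\<in>ksubsets d k. add_prob \<epsilon> w d k v S * private_view \<epsilon> w d k S j) = v j"
proof
  fix j assume j: "j \<in> {1..d}"
  define A where "A = {1..d}"
  define K where "K = ksubsets d k"
  define e where "e = exp \<epsilon>"
  define Dl where "Dl = wmax w k - wmin w d k"
  define W where "W = Wtot w d"
  define B where "B = wmin w d k"
  define N where "N = real (d choose k)"
  define a where "a = a_coef \<epsilon> w d k"
  define b where "b = b_coef \<epsilon> w d k"
  define P where "P = Phi \<epsilon> w d k"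
  define \<alpha> where "\<alpha> = (e - 1) / (Dl * P)"
  define \<beta> where "\<beta> = 1 / P - B / Dl * ((e - 1) / P)"
  have e1: "e > 1" using assms(1) by (simp add: e_def)
  have Dl: "Dl > 0" using assms(5) by (simp add: Dl_def)
  have dk: "k < d" "d \<ge> 2" using assms(3,4) by auto
  have finA: "finite A" and cardA: "card A = d" by (auto simp: A_def)
  have Npos: "N > 0" using dk by (simp add: N_def)
  have Bk: "real d * B \<le> real k * W" using wmin_bound[OF assms(2-4)] by (simp add: B_def W_def)
  define D0 where "D0 = real k / real d * (e - 1) * W - e * B + wmax w k"
  have D0: "D0 = Dl + (e - 1) * (real k / real d * W - B)" by (simp add: D0_def Dl_def B_def algebra_simps)
  have "real k / real d * W - B \<ge> 0" using Bk dk by (simp add: field_simps)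
  then have D0pos: "D0 > 0" using D0 Dl e1 by (smt (verit) mult_nonneg_nonneg)
  have Pdef: "P = N * D0 / Dl" by (simp add: P_def Phi_def N_def D0_def Dl_def e_def W_def B_def)
  have Ppos: "P > 0" using Pdef Npos D0pos Dl by simp
  have p: "add_prob \<epsilon> w d k v S = \<alpha> * (\<Sum>i\<in>S. v i) + \<beta>" for S
  proof -
    have "add_prob \<epsilon> w d k v S = ((\<Sum>i\<in>S. v i) - B) / Dl * ((e - 1) / P) + 1 / P"
      by (simp add: add_prob_def e_def Dl_def B_def P_def)
    moreover have "((\<Sum>i\<in>S. v i) - B) / Dl * ((e - 1) / P) + 1 / P = \<alpha> * (\<Sum>i\<in>S. v i) + \<beta>"
      unfolding \<alpha>_def \<beta>_def using Dl Ppos by (simp add: field_simps)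
    ultimately show ?thesis by simp
  qed
  obtain \<sigma> where \<sigma>: "\<sigma> permutes {1..d}" "\<forall>j\<in>{1..d}. v j = w (\<sigma> j)"
    using assms(6) by (auto simp: scored_votes_def)
  have sumv: "(\<Sum>i\<in>A. v i) = W"
  proof -
    have "(\<Sum>i\<in>A. v i) = (\<Sum>i\<in>A. (w \<circ> \<sigma>) i)" using \<sigma>(2) by (simp add: A_def)
    also have "\<dots> = (\<Sum>i\<in>A. w i)" using sum.permute[OF \<sigma>(1), of w] by (simp add: A_def)
    finally show ?thesis by (simp add: W_def Wtot_def A_def)
  qed
  have F2: "(\<Sum>S\<in>K. \<Sum>i\<in>S. v i) = real k / real d * N * W"
    using sum_ksub_sum[OF finA, where m=k and f=v] by (simp add: K_def ksubsets_def cardA sumv N_def) (simp add: A_def)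
  have finK: "finite K" by (simp add: K_def ksubsets_def)
  have cardK: "card K = d choose k" using n_subsets[OF finA, of k] by (simp add: K_def ksubsets_def A_def cardA)
  define K' where "K' = {T. T \<subseteq> A - {j} \<and> card T = k - 1}"
  have jA: "j \<in> A" using j by (simp add: A_def)
  have Kj: "{S\<in>K. j \<in> S} = insert j ` K'"
    using ksub_insert[OF finA jA assms(3)] by (simp add: K_def ksubsets_def A_def K'_def) 
  have inj: "inj_on (insert j) K'"
    by (rule inj_onI) (metis Diff_insert_absorb subset_Diff_insert mem_Collect_eq K'_def)
  have cardK': "real (card K') = real k / real d * N"
  proof -
    have "card K' = (d - 1) choose (k - 1)" using n_subsets[of "A - {j}" "k - 1"] finA jA cardA
      by (simp add: K'_def)
    moreover have "k * (d choose k) = d * ((d - 1) choose (k - 1))"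
      using times_binomial_minus1_eq assms(3) by simp
    then have "real k * N = real d * real ((d - 1) choose (k - 1))" unfolding N_def by (metis of_nat_mult)
    ultimately show ?thesis using dk by (simp add: field_simps)
  qed
  have sumT: "(\<Sum>T\<in>K'. \<Sum>i\<in>T. v i) = (real k - 1) / (real d - 1) * (real k / real d * N) * (W - v j)"
  proof -
    have "(\<Sum>T\<in>K'. \<Sum>i\<in>T. v i) = real (k - 1) / real (card (A - {j})) * real (card (A - {j}) choose (k - 1)) * (\<Sum>i\<in>A - {j}. v i)"
      unfolding K'_def by (rule sum_ksub_sum) (use finA in auto)
    also have "\<dots> = (real k - 1) / (real d - 1) * real (card K') * (W - v j)"
      using n_subsets[of "A - {j}" "k - 1"] finA jA cardA assms(3) dk sumv sum_diff1[of A v j]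
      by (simp add: K'_def of_nat_diff)
    finally show ?thesis using cardK' by simp
  qed
  have F3: "(\<Sum>S\<in>{S\<in>K. j \<in> S}. \<Sum>i\<in>S. v i) = real k / real d * N * v j + (real k - 1) / (real d - 1) * (real k / real d * N) * (W - v j)"
  proof -
    have "(\<Sum>S\<in>{S\<in>K. j \<in> S}. \<Sum>i\<in>S. v i) = (\<Sum>T\<in>K'. \<Sum>i\<in>insert j T. v i)"
      unfolding Kj by (rule sum.reindex[OF inj, unfolded comp_def])
    also have "\<dots> = (\<Sum>T\<in>K'. v j + (\<Sum>i\<in>T. v i))"
    proof (rule sum.cong)
      fix T assume "T \<in> K'"
      then have "finite T" "j \<notin> T" using finA by (auto simp: K'_def intro: finite_subset)
      then show "(\<Sum>i\<in>insert j T. v i) = v j + (\<Sum>i\<in>T. v i)" by simp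
    qed simp
    also have "\<dots> = real (card K') * v j + (\<Sum>T\<in>K'. \<Sum>i\<in>T. v i)" by (simp add: sum.distrib)
    finally show ?thesis using cardK' sumT by simp
  qed
  have cardKj: "real (card {S\<in>K. j \<in> S}) = real k / real d * N"
    using Kj card_image[OF inj] cardK' by simp
  have "(\<Sum>S\<in>K. add_prob \<epsilon> w d k v S * private_view \<epsilon> w d k S j)
      = (\<Sum>S\<in>K. a * (if j \<in> S then add_prob \<epsilon> w d k v S else 0) - b * add_prob \<epsilon> w d k v S)"
    by (rule sum.cong) (auto simp: private_view_def a_def b_def algebra_simps)
  also have "\<dots> = a * (\<Sum>S\<in>{S\<in>K. j \<in> S}. add_prob \<epsilon> w d k v S) - b * (\<Sum>S\<in>K. add_prob \<epsilon> w d k v S)"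
    by (simp add: sum_subtractf sum_distrib_left[symmetric] sum.inter_filter[OF finK])
  also have "\<dots> = a * (\<alpha> * (real k / real d * N * v j + (real k - 1) / (real d - 1) * (real k / real d * N) * (W - v j)) + real k / real d * N * \<beta>)
       - b * (\<alpha> * (real k / real d * N * W) + N * \<beta>)"
    by (simp add: p sum.distrib sum_distrib_left[symmetric] F2 F3 cardKj cardK N_def)
  also have "\<dots> = v j"
  proof -
    have ad: "a = (W * (e - 1) - (real d / real k) * e * B + (real d / real k) * wmax w k) * (real d - 1) / ((real d - real k) * (e - 1))"
      by (simp add: a_def a_coef_def e_def W_def B_def)
    have bd: "b = ((real k - 1) * (e - 1) / (real d - 1) * W - e * B + wmax w k) * (real d - 1) / ((real d - real k) * (e - 1))"
      by (simp add: b_def b_coef_def e_def W_def B_def)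
    have wm: "wmax w k = Dl + B" by (simp add: Dl_def B_def)
    have d1: "real d - 1 > 0" "real d - real k > 0" "real k > 0" "real d > 0" using dk assms(3) by auto
    have D0': "D0 = real k / real d * (e - 1) * W - e * B + Dl + B" using D0_def wm by simp
    define n where "n = real k / real d * N"
    define X where "X = (e - 1) * (v j + (real k - 1) / (real d - 1) * (W - v j)) + Dl - B * (e - 1)"
    have al: "\<alpha> = (e - 1) / (N * D0)" unfolding \<alpha>_def Pdef using Dl Npos D0pos by (simp add: field_simps)
    have be: "\<beta> = (Dl - B * (e - 1)) / (N * D0)" unfolding \<beta>_def Pdef using Dl Npos D0pos by (simp add: field_simps)
    have D0ne: "D0 \<noteq> 0" using D0pos by simp
    have h1a: "\<alpha> * (n * W) + N * \<beta> = ((e - 1) * (real k / real d * W) + Dl - B * (e - 1)) / D0"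
      unfolding al be n_def using Npos D0ne d1 by (simp add: field_simps)
    have "(e - 1) * (real k / real d * W) + Dl - B * (e - 1) = D0" using D0 by (simp add: algebra_simps)
    then have h1: "\<alpha> * (n * W) + N * \<beta> = 1" using h1a D0ne by simp
    have h2: "\<alpha> * (n * v j + (real k - 1) / (real d - 1) * n * (W - v j)) + n * \<beta> = real k / real d * X / D0"
      unfolding al be n_def X_def using Npos D0ne d1 by (simp add: field_simps)
    have a2: "a = real d / real k * D0 * (real d - 1) / ((real d - real k) * (e - 1))"
    proof -
      have "W * (e - 1) - (real d / real k) * e * B + (real d / real k) * wmax w k = real d / real k * D0"
        unfolding D0' wm using d1 by (simp add: field_simps)
      then show ?thesis unfolding ad by simp
    qed
    have h3: "a * (real k / real d * X / D0) - b = v j"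
    proof -
      define c where "c = (real d - 1) / ((real d - real k) * (e - 1))"
      have nz: "real d - real k \<noteq> 0" "e - 1 \<noteq> 0" "real d - 1 \<noteq> 0" "real k \<noteq> 0" "real d \<noteq> 0"
        using d1 e1 by auto
      have s1: "a * (real k / real d * X / D0) = X * c"
      proof -
        have "a = real d / real k * D0 * c" unfolding a2 c_def by simp
        then show ?thesis using nz D0ne by (simp add: field_simps)
      qed
      have s2: "b = ((real k - 1) * (e - 1) / (real d - 1) * W - e * B + (Dl + B)) * c"
        unfolding bd c_def wm by (simp only: times_divide_eq_right)
      have s3: "X - ((real k - 1) * (e - 1) / (real d - 1) * W - e * B + (Dl + B)) = (e - 1) * v j * (real d - real k) / (real d - 1)"
      proof -
        define q where "q = (real k - 1) / (real d - 1)"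
        have "(real k - 1) * (e - 1) / (real d - 1) * W = q * (e - 1) * W" by (simp add: q_def)
        then have "X - ((real k - 1) * (e - 1) / (real d - 1) * W - e * B + (Dl + B)) = (e - 1) * v j * (1 - q)"
          unfolding X_def q_def[symmetric] by (simp add: algebra_simps)
        moreover have "1 - q = (real d - real k) / (real d - 1)" unfolding q_def using nz by (simp add: field_simps)
        ultimately show ?thesis by simp
      qed
      have "a * (real k / real d * X / D0) - b = (X - ((real k - 1) * (e - 1) / (real d - 1) * W - e * B + (Dl + B))) * c"
        using s1 s2 by (simp add: algebra_simps)
      also have "\<dots> = v j"
      proof -
        define r where "r = (e - 1) * (real d - real k)"
        have r: "r \<noteq> 0" using nz by (simp add: r_def)
        have "(e - 1) * v j * (real d - real k) / (real d - 1) * c = r * v j / (real d - 1) * ((real d - 1) / r)"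
          by (simp add: r_def c_def mult.commute mult.left_commute)
        also have "\<dots> = v j" using r nz by (simp add: field_simps)
        finally show ?thesis unfolding s3 .
      qed
      finally show ?thesis .
    qed
    show ?thesis using h1 h2 h3 by (simp add: n_def mult.assoc)
  qed
  finally show "(\<Sum>S\<in>ksubsets d k. add_prob \<epsilon> w d k v S * private_view \<epsilon> w d k S j) = v j"
    by (simp add: K_def)
qed

end
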